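(* For each $n$ let $\mu_n$ be a conjugacy-invariant probability distribution on $\mathfrak{S}_n$ and let $\Sigma_n\sim\mu_n$ (all defined on a common probability space), and suppose $\mathbb{P}\big(\lim_{n\to\infty}m_1(\Sigma_n)/n=0\big)=1$. Then $\{\Sigma_n\}$ is quasi-random, in the sense that for every $k\ge1$ and every $v\in\mathfrak{S}_k$, $N_v(\Sigma_n)/\binom{n}{k}\to 1/k!$ in probability.
   Context: A probability distribution $\mu_n$ on $\mathfrak{S}_n$ is conjugacy-invariant if $\mu_n(w^{-1}\pi w)=\mu_n(\pi)$ for all $\pi,w\in\mathfrak{S}_n$. $m_1(\pi)$ is the number of fixed points of $\pi$. For $v\in\mathfrak{S}_k$ and $\pi\in\mathfrak{S}_n$, $N_v(\pi)$ is the number of index sets $i_1<\dots<i_k$ in $[n]$ such that $\pi(i_1),\dots,\pi(i_k)$ are in the same relative order as $v(1),\dots,v(k)$. *)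

theory Defs
  imports "HOL-Probability.Probability" "HOL-Combinatorics.Permutations"
begin

text \<open>Permutations of [n] are represented as functions p :: nat \<Rightarrow> nat with
  p permutes {0..<n} (0-based indexing).\<close>

definition fixed_points :: "nat \<Rightarrow> (nat \<Rightarrow> nat) \<Rightarrow> nat" where
  "fixed_points n p = card {i \<in> {0..<n}. p i = i}"

definition pattern_count :: "nat \<Rightarrow> (nat \<Rightarrow> nat) \<Rightarrow> nat \<Rightarrow> (nat \<Rightarrow> nat) \<Rightarrow> nat" where
  "pattern_count k v n p = card {f \<in> {0..<k} \<rightarrow>\<^sub>E {0..<n}.
      strict_mono_on {0..<k} f \<and>
      (\<forall>a<k. \<forall>b<k. p (f a) < p (f b) \<longleftrightarrow> v a < v b)}"

definition conj_invariant :: "'a measure \<Rightarrow> nat \<Rightarrow> ('a \<Rightarrow> nat \<Rightarrow> nat) \<Rightarrow> bool" where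
  "conj_invariant M n X \<longleftrightarrow>
     (\<forall>p w. w permutes {0..<n} \<longrightarrow>
        measure M {x \<in> space M. X x = w \<circ> p \<circ> inv w} = measure M {x \<in> space M. X x = p})"

end

theory Submission
  imports Defs
begin
definition Perm :: "nat \<Rightarrow> (nat \<Rightarrow> nat) set" where "Perm n = {p. p permutes {0..<n}}"

lemma finite_Perm[simp]: "finite (Perm n)"
  unfolding Perm_def by (rule finite_permutations) simp

locale cinv =
  fixes M :: "'a measure" and S :: "nat \<Rightarrow> 'a \<Rightarrow> nat \<Rightarrow> nat"
  assumes ps: "prob_space M"
    and meas: "\<And>n. S n \<in> M \<rightarrow>\<^sub>M count_space UNIV"
    and perm: "\<And>n x. x \<in> space M \<Longrightarrow> S n x permutes {0..<n}"
    and ci: "\<And>n. conj_invariant M n (S n)"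
begin

definition mm :: "nat \<Rightarrow> (nat \<Rightarrow> nat) \<Rightarrow> real" where
  "mm n p = measure M {x \<in> space M. S n x = p}"

lemma sets_pred: "{x \<in> space M. P (S n x)} \<in> sets M"
proof -
  have "S n -` {p. P p} \<inter> space M \<in> sets M"
    by (rule measurable_sets[OF meas]) simp
  moreover have "S n -` {p. P p} \<inter> space M = {x \<in> space M. P (S n x)}" by auto
  ultimately show ?thesis by simp
qed

lemma meas_fun: "(\<lambda>x. h (S n x)) \<in> borel_measurable M"
  by (rule measurable_compose_rev[OF _ meas]) simp

lemma measure_pred: "measure M {x \<in> space M. P (S n x)} = (\<Sum>p\<in>{p\<in>Perm n. P p}. mm n p)"
proof -
  have eq: "{x \<in> space M. P (S n x)} = (\<Union>p\<in>{p\<in>Perm n. P p}. {x \<in> space M. S n x = p})"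
    using perm unfolding Perm_def by auto
  show ?thesis unfolding eq mm_def
    apply (rule measure_finite_Union)
    using sets_pred finite_measure.emeasure_finite[OF prob_space.finite_measure[OF ps]]
    by (auto simp: disjoint_family_on_def)
qed

lemma mm_nonneg: "mm n p \<ge> 0" by (simp add: mm_def)

lemma mm_sum: "(\<Sum>p\<in>Perm n. mm n p) = 1"
proof -
  have "measure M {x \<in> space M. True} = 1"
    using prob_space.prob_space[OF ps] by simp
  thus ?thesis using measure_pred[of "\<lambda>_. True" n] by simp
qed

lemma integral_fun: "integral\<^sup>L M (\<lambda>x. h (S n x)) = (\<Sum>p\<in>Perm n. h p * mm n p)"
proof -
  have fin: "\<And>A. emeasure M A < \<infinity>"
    using finite_measure.emeasure_finite[OF prob_space.finite_measure[OF ps]] by (simp add: less_top)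
  have "integral\<^sup>L M (\<lambda>x. h (S n x)) = integral\<^sup>L M (\<lambda>x. \<Sum>p\<in>Perm n. h p * indicator {x \<in> space M. S n x = p} x)"
  proof (rule Bochner_Integration.integral_cong[OF refl])
    fix x assume x: "x \<in> space M"
    have "S n x \<in> Perm n" using perm[OF x] by (simp add: Perm_def)
    hence "(\<Sum>p\<in>Perm n. h p * indicator {x \<in> space M. S n x = p} x) = 
           (\<Sum>p\<in>{S n x}. h p * indicator {x \<in> space M. S n x = p} x)"
      by (intro sum.mono_neutral_right) (auto simp: x indicator_def)
    thus "h (S n x) = (\<Sum>p\<in>Perm n. h p * indicator {x \<in> space M. S n x = p} x)" by (simp add: x)
  qed
  also have "\<dots> = (\<Sum>p\<in>Perm n. h p * mm n p)"
  proof -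
    have i: "\<And>p. integrable M (\<lambda>x. h p * indicator {x \<in> space M. S n x = p} x :: real)"
      by (intro integrable_mult_right integrable_real_indicator sets_pred fin)
    have "integral\<^sup>L M (\<lambda>x. \<Sum>p\<in>Perm n. h p * indicator {x \<in> space M. S n x = p} x) =
      (\<Sum>p\<in>Perm n. integral\<^sup>L M (\<lambda>x. h p * indicator {x \<in> space M. S n x = p} x))"
      by (rule Bochner_Integration.integral_sum) (use i in auto)
    also have "\<dots> = (\<Sum>p\<in>Perm n. h p * mm n p)"
      by (intro sum.cong refl) (simp add: mm_def sets_pred fin Int_absorb2)
    finally show ?thesis .
  qed
  finally show ?thesis .
qed

lemma mm_conj: assumes "w \<in> Perm n" shows "mm n (inv w \<circ> p \<circ> w) = mm n p"
proof -
  have w: "inv w permutes {0..<n}" using assms permutes_inv by (auto simp: Perm_def)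
  have b: "bij w" using assms permutes_bij by (auto simp: Perm_def)
  from ci[of n] w have "measure M {x \<in> space M. S n x = inv w \<circ> p \<circ> inv (inv w)} = measure M {x \<in> space M. S n x = p}"
    unfolding conj_invariant_def by blast
  thus ?thesis by (simp add: mm_def inv_inv_eq[OF b])
qed

end

definition pat :: "nat \<Rightarrow> (nat \<Rightarrow> nat) \<Rightarrow> (nat \<Rightarrow> nat) \<Rightarrow> (nat \<Rightarrow> nat) \<Rightarrow> bool" where
  "pat k f u q \<longleftrightarrow> (\<forall>a<k. \<forall>b<k. q (f a) < q (f b) \<longleftrightarrow> u a < u b)"

definition gen :: "nat set \<Rightarrow> (nat \<Rightarrow> nat) \<Rightarrow> bool" where
  "gen X q \<longleftrightarrow> (\<forall>x\<in>X. q x \<notin> X)"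

locale cdist =
  fixes n :: nat and m :: "(nat \<Rightarrow> nat) \<Rightarrow> real"
  assumes nonneg: "\<And>p. m p \<ge> 0"
    and tot: "(\<Sum>p\<in>Perm n. m p) = 1"
    and conj: "\<And>w p. w \<in> Perm n \<Longrightarrow> m (inv w \<circ> p \<circ> w) = m p"
begin

definition Pr :: "((nat \<Rightarrow> nat) \<Rightarrow> bool) \<Rightarrow> real" where
  "Pr P = (\<Sum>p\<in>Perm n. if P p then m p else 0)"

lemma Pr_alt: "Pr P = (\<Sum>p\<in>{p\<in>Perm n. P p}. m p)"
  unfolding Pr_def by (simp add: sum.inter_filter)

lemma Pr_nonneg: "Pr P \<ge> 0"
  unfolding Pr_def by (intro sum_nonneg) (auto simp: nonneg)

lemma Pr_mono: "(\<And>q. q \<in> Perm n \<Longrightarrow> P q \<Longrightarrow> Q q) \<Longrightarrow> Pr P \<le> Pr Q"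
  unfolding Pr_def by (intro sum_mono) (auto simp: nonneg)

lemma Pr_cong: "(\<And>q. q \<in> Perm n \<Longrightarrow> P q = Q q) \<Longrightarrow> Pr P = Pr Q"
  unfolding Pr_def by (intro sum.cong) auto

lemma Pr_True: "Pr (\<lambda>_. True) = 1"
  unfolding Pr_def using tot by simp

lemma Pr_le1: "Pr P \<le> 1"
  using Pr_mono[of P "\<lambda>_. True"] Pr_True by simp

lemma Pr_split: "Pr P = Pr (\<lambda>q. P q \<and> Q q) + Pr (\<lambda>q. P q \<and> \<not> Q q)"
  unfolding Pr_def by (subst sum.distrib[symmetric]) (intro sum.cong, auto)

lemma Pr_compl: "Pr (\<lambda>q. \<not> P q) = 1 - Pr P"
  using Pr_split[of "\<lambda>_. True" P] Pr_True by simp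

lemma Pr_union:
  assumes "finite I"
  shows "Pr (\<lambda>q. \<exists>i\<in>I. P i q) \<le> (\<Sum>i\<in>I. Pr (P i))"
proof -
  have "Pr (\<lambda>q. \<exists>i\<in>I. P i q) \<le> (\<Sum>p\<in>Perm n. \<Sum>i\<in>I. if P i p then m p else 0)"
    unfolding Pr_def
  proof (intro sum_mono)
    fix p assume "p \<in> Perm n"
    show "(if \<exists>i\<in>I. P i p then m p else 0) \<le> (\<Sum>i\<in>I. if P i p then m p else 0)"
    proof (cases "\<exists>i\<in>I. P i p")
      case True
      then obtain i where i: "i \<in> I" "P i p" by blast
      have "(\<Sum>i\<in>{i}. if P i p then m p else 0) \<le> (\<Sum>i\<in>I. if P i p then m p else 0)"
        using i assms by (intro sum_mono2) (auto simp: nonneg)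
      thus ?thesis using True i by simp
    qed (auto intro!: sum_nonneg simp: nonneg)
  qed
  also have "\<dots> = (\<Sum>i\<in>I. Pr (P i))" unfolding Pr_def by (rule sum.swap)
  finally show ?thesis .
qed

lemma Pr_disj_sum:
  assumes "finite U" and "\<And>q u u'. q \<in> Perm n \<Longrightarrow> u \<in> U \<Longrightarrow> u' \<in> U \<Longrightarrow> Q u q \<Longrightarrow> Q u' q \<Longrightarrow> u = u'"
  shows "(\<Sum>u\<in>U. Pr (Q u)) = Pr (\<lambda>q. \<exists>u\<in>U. Q u q)"
proof -
  have "(\<Sum>u\<in>U. Pr (Q u)) = (\<Sum>p\<in>Perm n. \<Sum>u\<in>U. if Q u p then m p else 0)"
    unfolding Pr_def by (rule sum.swap)
  also have "\<dots> = Pr (\<lambda>q. \<exists>u\<in>U. Q u q)"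
    unfolding Pr_def
  proof (intro sum.cong refl)
    fix p assume p: "p \<in> Perm n"
    show "(\<Sum>u\<in>U. if Q u p then m p else 0) = (if \<exists>u\<in>U. Q u p then m p else 0)"
    proof (cases "\<exists>u\<in>U. Q u p")
      case True
      then obtain u where u: "u \<in> U" "Q u p" by blast
      have "(\<Sum>u\<in>U. if Q u p then m p else 0) = (\<Sum>u\<in>{u}. if Q u p then m p else 0)"
        using assms(1) u(1) assms(2)[OF p u(1) _ u(2)] by (intro sum.mono_neutral_right) auto
      thus ?thesis using u by auto
    qed auto
  qed
  finally show ?thesis .
qed

lemma Pr_conj:
  assumes w: "w \<in> Perm n"
  shows "Pr (\<lambda>q. P (inv w \<circ> q \<circ> w)) = Pr P"
proof -
  have wp: "w permutes {0..<n}" using w by (simp add: Perm_def)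
  let ?phi = "\<lambda>p. inv w \<circ> p \<circ> w"
  have bij: "bij_betw ?phi (Perm n) (Perm n)"
  proof (rule bij_betw_byWitness[where f' = "\<lambda>p. w \<circ> p \<circ> inv w"])
    show "\<forall>a\<in>Perm n. w \<circ> (inv w \<circ> a \<circ> w) \<circ> inv w = a"
      using permutes_inv_o[OF wp] by (simp add: o_assoc) (simp add: comp_assoc)
    show "\<forall>a\<in>Perm n. inv w \<circ> (w \<circ> a \<circ> inv w) \<circ> w = a"
      using permutes_inv_o[OF wp] by (simp add: o_assoc) (simp add: comp_assoc)
    show "?phi ` Perm n \<subseteq> Perm n"
      using wp permutes_inv[OF wp] by (auto simp: Perm_def intro!: permutes_compose)
    show "(\<lambda>p. w \<circ> p \<circ> inv w) ` Perm n \<subseteq> Perm n"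
      using wp permutes_inv[OF wp] by (auto simp: Perm_def intro!: permutes_compose)
  qed
  have "Pr P = (\<Sum>p\<in>Perm n. (\<lambda>r. if P r then m r else 0) (?phi p))"
    unfolding Pr_def by (rule sum.reindex_bij_betw[OF bij, symmetric])
  also have "\<dots> = Pr (\<lambda>q. P (inv w \<circ> q \<circ> w))"
    unfolding Pr_def by (intro sum.cong refl) (simp add: conj[OF w])
  finally show ?thesis by simp
qed

lemma Pr_fix_eq:
  assumes "x < n" "y < n"
  shows "Pr (\<lambda>q. q x = x) = Pr (\<lambda>q. q y = y)"
proof -
  define w where "w = Transposition.transpose x y"
  have w: "w \<in> Perm n" unfolding w_def Perm_def using assms by (auto intro: permutes_swap_id)
  have "Pr (\<lambda>q. q y = y) = Pr (\<lambda>q. (inv w \<circ> q \<circ> w) y = y)"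
    using Pr_conj[OF w, of "\<lambda>q. q y = y"] by simp
  also have "\<dots> = Pr (\<lambda>q. q x = x)"
    by (intro Pr_cong) (auto simp: w_def transpose_eq_iff)
  finally show ?thesis by simp
qed

lemma Pr_off_eq:
  assumes "x < n" "y < n" "y' < n" "x \<noteq> y" "x \<noteq> y'"
  shows "Pr (\<lambda>q. q x = y) = Pr (\<lambda>q. q x = y')"
proof -
  define w where "w = Transposition.transpose y y'"
  have w: "w \<in> Perm n" unfolding w_def Perm_def using assms by (auto intro: permutes_swap_id)
  have "Pr (\<lambda>q. q x = y') = Pr (\<lambda>q. (inv w \<circ> q \<circ> w) x = y')"
    using Pr_conj[OF w, of "\<lambda>q. q x = y'"] by simp
  also have "\<dots> = Pr (\<lambda>q. q x = y)"
    using assms by (intro Pr_cong) (auto simp: w_def transpose_eq_iff)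
  finally show ?thesis by simp
qed

lemma Pr_off_le:
  assumes "x < n" "y < n" "x \<noteq> y"
  shows "Pr (\<lambda>q. q x = y) \<le> 1 / (real n - 1)"
proof -
  let ?Y = "{0..<n} - {x}"
  have c: "card ?Y = n - 1" using assms by simp
  have "(\<Sum>y'\<in>?Y. Pr (\<lambda>q. q x = y')) = Pr (\<lambda>q. \<exists>y'\<in>?Y. q x = y')"
    by (intro Pr_disj_sum) auto
  also have "\<dots> \<le> 1" by (rule Pr_le1)
  moreover have "(\<Sum>y'\<in>?Y. Pr (\<lambda>q. q x = y')) = (\<Sum>y'\<in>?Y. Pr (\<lambda>q. q x = y))"
    by (intro sum.cong refl) (use Pr_off_eq[OF assms(1,2) _ assms(3)] in auto)
  ultimately have "(\<Sum>y'\<in>?Y. Pr (\<lambda>q. q x = y)) \<le> 1" by linarith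
  hence "real (n - 1) * Pr (\<lambda>q. q x = y) \<le> 1" using c by simp
  moreover have "real (n - 1) = real n - 1" using assms by simp
  moreover have "real n - 1 > 0" using assms by simp
  ultimately show ?thesis by (simp add: field_simps)
qed

lemma Pr_fix_sum: "(\<Sum>x<n. Pr (\<lambda>q. q x = x)) = (\<Sum>p\<in>Perm n. m p * real (fixed_points n p))"
proof -
  have "(\<Sum>x<n. Pr (\<lambda>q. q x = x)) = (\<Sum>p\<in>Perm n. \<Sum>x<n. if p x = x then m p else 0)"
    unfolding Pr_def by (rule sum.swap)
  also have "\<dots> = (\<Sum>p\<in>Perm n. m p * real (fixed_points n p))"
  proof (intro sum.cong refl)
    fix p
    have "(\<Sum>x\<in>{0..<n}. if p x = x then m p else 0) = (\<Sum>x\<in>{i \<in> {0..<n}. p i = i}. m p)"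
      by (rule sum.inter_filter[symmetric]) simp
    thus "(\<Sum>x<n. if p x = x then m p else 0) = m p * real (fixed_points n p)"
      by (simp add: fixed_points_def lessThan_atLeast0)
  qed
  finally show ?thesis .
qed

lemma Pr_fix0:
  assumes "x < n"
  shows "Pr (\<lambda>q. q x = x) = (\<Sum>p\<in>Perm n. m p * (real (fixed_points n p) / real n))"
proof -
  have "(\<Sum>y<n. Pr (\<lambda>q. q y = y)) = (\<Sum>y<n. Pr (\<lambda>q. q x = x))"
    by (intro sum.cong refl) (use Pr_fix_eq[OF assms] in auto)
  hence "(\<Sum>y<n. Pr (\<lambda>q. q y = y)) = real n * Pr (\<lambda>q. q x = x)" by simp
  hence h1: "real n * Pr (\<lambda>q. q x = x) = (\<Sum>p\<in>Perm n. m p * real (fixed_points n p))"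
    using Pr_fix_sum by simp
  have h2: "(\<Sum>p\<in>Perm n. m p * (real (fixed_points n p) / real n)) =
      (\<Sum>p\<in>Perm n. m p * real (fixed_points n p)) / real n"
    by (simp add: sum_divide_distrib)
  have "real n > 0" using assms by simp
  thus ?thesis unfolding h2 using h1 by (simp add: field_simps)
qed

definition rho where "rho = Pr (\<lambda>q. q 0 = 0)"

lemma Pr_point_le:
  assumes "x < n" "y < n" "n \<ge> 2"
  shows "Pr (\<lambda>q. q x = y) \<le> rho + 1 / (real n - 1)"
proof (cases "x = y")
  case True
  have "Pr (\<lambda>q. q x = y) = rho" unfolding rho_def True using Pr_fix_eq[of y 0] assms by simp
  moreover have "1 / (real n - 1) \<ge> 0" using assms by simp
  ultimately show ?thesis by simp
next
  case False
  thus ?thesis using Pr_off_le[OF assms(1,2) False] Pr_nonneg[of "\<lambda>q. q 0 = 0"]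
    by (simp add: rho_def)
qed

lemma Pr_not_gen:
  assumes "X \<subseteq> {0..<n}" "n \<ge> 2"
  shows "Pr (\<lambda>q. \<not> gen X q) \<le> real (card X) ^ 2 * (rho + 1 / (real n - 1))"
proof -
  have fin: "finite X" using assms finite_subset by blast
  have "Pr (\<lambda>q. \<not> gen X q) = Pr (\<lambda>q. \<exists>z\<in>X \<times> X. q (fst z) = snd z)"
    by (intro Pr_cong) (auto simp: gen_def)
  also have "\<dots> \<le> (\<Sum>z\<in>X \<times> X. Pr (\<lambda>q. q (fst z) = snd z))"
    using fin by (intro Pr_union) auto
  also have "\<dots> \<le> (\<Sum>z\<in>X \<times> X. rho + 1 / (real n - 1))"
    using assms by (intro sum_mono Pr_point_le) auto
  also have "\<dots> = real (card X) ^ 2 * (rho + 1 / (real n - 1))"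
    by (simp add: card_cartesian_product power2_eq_square)
  finally show ?thesis .
qed

end

lemma rank_perm:
  assumes u: "u permutes {0..<k}" and a: "a < k"
  shows "card {b\<in>{0..<k}. u b < u a} = u a"
proof -
  have ua: "u a < k" using permutes_in_image[OF u] a by simp
  have inj: "inj_on u {b\<in>{0..<k}. u b < u a}"
    using permutes_inj[OF u] by (auto intro: inj_on_subset)
  have "u ` {b\<in>{0..<k}. u b < u a} = {0..<u a}"
  proof
    show "u ` {b\<in>{0..<k}. u b < u a} \<subseteq> {0..<u a}" by auto
    show "{0..<u a} \<subseteq> u ` {b\<in>{0..<k}. u b < u a}"
    proof
      fix c assume c: "c \<in> {0..<u a}"
      hence "c \<in> u ` {0..<k}" using permutes_image[OF u] ua by simp
      then obtain b where "b \<in> {0..<k}" "c = u b" by auto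
      thus "c \<in> u ` {b\<in>{0..<k}. u b < u a}" using c by auto
    qed
  qed
  thus ?thesis using card_image[OF inj] by simp
qed

lemma std_unique:
  assumes u: "u \<in> Perm k" and u': "u' \<in> Perm k"
    and o: "\<And>a b. a < k \<Longrightarrow> b < k \<Longrightarrow> (u a < u b) = (u' a < u' b)"
  shows "u = u'"
proof
  fix a
  have up: "u permutes {0..<k}" and u'p: "u' permutes {0..<k}" using u u' by (auto simp: Perm_def)
  show "u a = u' a"
  proof (cases "a < k")
    case True
    have "{b\<in>{0..<k}. u b < u a} = {b\<in>{0..<k}. u' b < u' a}" using o True by auto
    thus ?thesis using rank_perm[OF up True] rank_perm[OF u'p True] by simp
  next
    case False
    thus ?thesis using permutes_not_in[OF up] permutes_not_in[OF u'p] by simp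
  qed
qed

lemma std_exists:
  fixes y :: "nat \<Rightarrow> nat"
  assumes inj: "inj_on y {0..<k}"
  shows "\<exists>u\<in>Perm k. \<forall>a<k. \<forall>b<k. (y a < y b) = (u a < u b)"
proof -
  define u where "u a = (if a < k then card {c\<in>{0..<k}. y c < y a} else a)" for a
  have mono: "u a < u b" if "a < k" "b < k" "y a < y b" for a b
  proof -
    have "{c\<in>{0..<k}. y c < y a} < {c\<in>{0..<k}. y c < y b}" using that by auto
    thus ?thesis using that psubset_card_mono[of "{c\<in>{0..<k}. y c < y b}"] by (simp add: u_def)
  qed
  have iff: "(y a < y b) = (u a < u b)" if "a < k" "b < k" for a b
  proof (cases "y a < y b")
    case True thus ?thesis using mono that by simp
  next
    case False
    hence "y b < y a \<or> y a = y b" by auto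
    thus ?thesis
    proof
      assume "y b < y a" thus ?thesis using mono[of b a] that False by simp
    next
      assume "y a = y b" hence "a = b" using inj that by (auto dest: inj_onD)
      thus ?thesis using False by simp
    qed
  qed
  have into: "u ` {0..<k} \<subseteq> {0..<k}"
  proof
    fix z assume "z \<in> u ` {0..<k}"
    then obtain a where a: "a < k" "z = u a" by auto
    have "card {c\<in>{0..<k}. y c < y a} \<le> card ({0..<k} - {a})"
      by (intro card_mono) auto
    thus "z \<in> {0..<k}" using a by (simp add: u_def)
  qed
  have injU: "inj_on u {0..<k}"
  proof (rule inj_onI)
    fix a b assume ab: "a \<in> {0..<k}" "b \<in> {0..<k}" "u a = u b"
    show "a = b"
    proof (rule ccontr)
      assume "a \<noteq> b"
      hence "y a \<noteq> y b" using inj ab by (auto dest: inj_onD)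
      hence "y a < y b \<or> y b < y a" by auto
      thus False using iff ab by auto
    qed
  qed
  have "u ` {0..<k} = {0..<k}" by (rule endo_inj_surj[OF _ into injU]) simp
  hence "bij_betw u {0..<k} {0..<k}" using injU by (simp add: bij_betw_def)
  hence "u permutes {0..<k}" by (rule bij_imp_permutes) (simp add: u_def)
  hence "u \<in> Perm k" by (simp add: Perm_def)
  moreover have "\<forall>a<k. \<forall>b<k. (y a < y b) = (u a < u b)" using iff by blast
  ultimately show ?thesis by blast
qed

lemma all_perm_reindex:
  fixes t :: "nat \<Rightarrow> nat"
  assumes t: "t permutes {0..<k}"
  shows "(\<forall>a<k. \<forall>b<k. P (t a) (t b)) = (\<forall>a<k. \<forall>b<k. P a b)"
proof
  assume h: "\<forall>a<k. \<forall>b<k. P (t a) (t b)"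
  show "\<forall>a<k. \<forall>b<k. P a b"
  proof (intro allI impI)
    fix a b assume ab: "a < k" "b < k"
    have i: "inv t a < k" "inv t b < k"
      using ab permutes_in_image[OF permutes_inv[OF t]] by auto
    have "P (t (inv t a)) (t (inv t b))" by (rule h[rule_format]) (fact i)+
    thus "P a b" using permutes_inverses(1)[OF t] by simp
  qed
next
  assume h: "\<forall>a<k. \<forall>b<k. P a b"
  show "\<forall>a<k. \<forall>b<k. P (t a) (t b)"
  proof (intro allI impI)
    fix a b assume ab: "a < k" "b < k"
    have i: "t a < k" "t b < k" using ab permutes_in_image[OF t] by auto
    show "P (t a) (t b)" by (rule h[rule_format]) (fact i)+
  qed
qed

context cdist
begin

lemma sym:
  assumes f: "strict_mono_on {0..<k} f" and FX: "f ` {0..<k} \<subseteq> X" and Xn: "X \<subseteq> {0..<n}"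
    and Rinv: "\<And>w q. w permutes f ` {0..<k} \<Longrightarrow> q \<in> Perm n \<Longrightarrow> gen X q \<Longrightarrow> R (inv w \<circ> q \<circ> w) = R q"
    and u: "u \<in> Perm k" and u': "u' \<in> Perm k"
  shows "Pr (\<lambda>q. pat k f u q \<and> R q \<and> gen X q) = Pr (\<lambda>q. pat k f u' q \<and> R q \<and> gen X q)"
proof -
  define F where "F = f ` {0..<k}"
  define t where "t = inv u' \<circ> u"
  have up: "u permutes {0..<k}" and u'p: "u' permutes {0..<k}" using u u' by (auto simp: Perm_def)
  have tp: "t permutes {0..<k}" unfolding t_def by (intro permutes_compose up permutes_inv u'p)
  have injf: "inj_on f {0..<k}" by (rule strict_mono_on_imp_inj_on[OF f])
  define w where "w = (\<lambda>x. if x \<in> F then f (t (the_inv_into {0..<k} f x)) else x)"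
  have wf: "w (f a) = f (t a)" if "a < k" for a
    using that the_inv_into_f_f[OF injf] by (simp add: w_def F_def)
  have b1: "bij_betw f {0..<k} F" unfolding F_def by (rule inj_on_imp_bij_betw[OF injf])
  have b2: "bij_betw (the_inv_into {0..<k} f) F {0..<k}" by (rule bij_betw_the_inv_into[OF b1])
  have b3: "bij_betw t {0..<k} {0..<k}" by (rule permutes_imp_bij[OF tp])
  have "bij_betw (f \<circ> (t \<circ> the_inv_into {0..<k} f)) F F"
    by (rule bij_betw_trans[OF bij_betw_trans[OF b2 b3] b1])
  hence "bij_betw w F F"
    by (rule bij_betw_cong[THEN iffD1, rotated]) (simp add: w_def)
  hence wF: "w permutes F" by (rule bij_imp_permutes) (simp add: w_def)
  have FX': "F \<subseteq> X" using FX by (simp add: F_def)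
  have wX: "w permutes X" by (rule permutes_subset[OF wF FX'])
  have wn: "w \<in> Perm n" using permutes_subset[OF wX Xn] by (simp add: Perm_def)
  have iwF: "inv w permutes F" by (rule permutes_inv[OF wF])
  have iwX: "inv w permutes X" by (rule permutes_inv[OF wX])
  have key: "(pat k f u (inv w \<circ> q \<circ> w) \<and> R (inv w \<circ> q \<circ> w) \<and> gen X (inv w \<circ> q \<circ> w)) =
             (pat k f u' q \<and> R q \<and> gen X q)" if q: "q \<in> Perm n" for q
  proof -
    have g: "gen X (inv w \<circ> q \<circ> w) = gen X q"
    proof -
      have "gen X (inv w \<circ> q \<circ> w) = (\<forall>x\<in>X. q (w x) \<notin> X)"
        unfolding gen_def using permutes_in_image[OF iwX] by simp
      also have "\<dots> = (\<forall>x\<in>X. q x \<notin> X)"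
      proof
        assume h: "\<forall>x\<in>X. q (w x) \<notin> X"
        show "\<forall>x\<in>X. q x \<notin> X"
        proof
          fix x assume x: "x \<in> X"
          have "inv w x \<in> X" using permutes_in_image[OF iwX] x by simp
          hence "q (w (inv w x)) \<notin> X" using h by blast
          thus "q x \<notin> X" using permutes_inverses(1)[OF wX] by simp
        qed
      next
        assume h: "\<forall>x\<in>X. q x \<notin> X"
        thus "\<forall>x\<in>X. q (w x) \<notin> X" using permutes_in_image[OF wX] by simp
      qed
      finally show ?thesis unfolding gen_def .
    qed
    show ?thesis
    proof (cases "gen X q")
      case False thus ?thesis using g by simp
    next
      case True
      have r: "R (inv w \<circ> q \<circ> w) = R q" using Rinv[OF wF[unfolded F_def] q True] .
      have vals: "(inv w \<circ> q \<circ> w) (f a) = q (f (t a))" if a: "a < k" for a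
      proof -
        have ta: "t a < k" using permutes_in_image[OF tp] a by simp
        hence "f (t a) \<in> X" using FX by auto
        hence "q (f (t a)) \<notin> X" using True by (simp add: gen_def)
        hence "q (f (t a)) \<notin> F" using FX' by auto
        hence "inv w (q (f (t a))) = q (f (t a))" using permutes_not_in[OF iwF] by simp
        thus ?thesis using wf[OF a] by simp
      qed
      have uu: "u a = u' (t a)" for a
        using permutes_inverses(1)[OF u'p] by (simp add: t_def)
      have "pat k f u (inv w \<circ> q \<circ> w) = (\<forall>a<k. \<forall>b<k. (q (f (t a)) < q (f (t b))) = (u' (t a) < u' (t b)))"
        unfolding pat_def using vals uu by simp
      also have "\<dots> = pat k f u' q"
        unfolding pat_def by (rule all_perm_reindex[OF tp, where P = "\<lambda>a b. (q (f a) < q (f b)) = (u' a < u' b)"])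
      finally show ?thesis using r g True by simp
    qed
  qed
  have "Pr (\<lambda>q. pat k f u' q \<and> R q \<and> gen X q) =
        Pr (\<lambda>q. (\<lambda>r. pat k f u r \<and> R r \<and> gen X r) (inv w \<circ> q \<circ> w))"
    by (intro Pr_cong) (use key in simp)
  also have "\<dots> = Pr (\<lambda>q. pat k f u q \<and> R q \<and> gen X q)" by (rule Pr_conj[OF wn])
  finally show ?thesis by simp
qed

lemma sym_sum:
  assumes f: "strict_mono_on {0..<k} f" and FX: "f ` {0..<k} \<subseteq> X" and Xn: "X \<subseteq> {0..<n}"
    and Rinv: "\<And>w q. w permutes f ` {0..<k} \<Longrightarrow> q \<in> Perm n \<Longrightarrow> gen X q \<Longrightarrow> R (inv w \<circ> q \<circ> w) = R q"
    and v: "v \<in> Perm k"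
  shows "fact k * Pr (\<lambda>q. pat k f v q \<and> R q \<and> gen X q) = Pr (\<lambda>q. R q \<and> gen X q)"
proof -
  have injf: "inj_on f {0..<k}" by (rule strict_mono_on_imp_inj_on[OF f])
  have cardP: "card (Perm k) = fact k"
    unfolding Perm_def by (rule card_permutations) auto
  have "(\<Sum>u\<in>Perm k. Pr (\<lambda>q. pat k f u q \<and> R q \<and> gen X q)) =
        (\<Sum>u\<in>Perm k. Pr (\<lambda>q. pat k f v q \<and> R q \<and> gen X q))"
    by (intro sum.cong refl sym[OF f FX Xn Rinv] v) auto
  also have "\<dots> = fact k * Pr (\<lambda>q. pat k f v q \<and> R q \<and> gen X q)"
    using cardP by simp
  finally have e1: "(\<Sum>u\<in>Perm k. Pr (\<lambda>q. pat k f u q \<and> R q \<and> gen X q)) =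
        fact k * Pr (\<lambda>q. pat k f v q \<and> R q \<and> gen X q)" .
  have "(\<Sum>u\<in>Perm k. Pr (\<lambda>q. pat k f u q \<and> R q \<and> gen X q)) =
        Pr (\<lambda>q. \<exists>u\<in>Perm k. pat k f u q \<and> R q \<and> gen X q)"
  proof (rule Pr_disj_sum)
    fix q u u' assume "u \<in> Perm k" "u' \<in> Perm k" "pat k f u q \<and> R q \<and> gen X q"
      "pat k f u' q \<and> R q \<and> gen X q"
    thus "u = u'" by (intro std_unique) (auto simp: pat_def)
  qed simp
  also have "\<dots> = Pr (\<lambda>q. R q \<and> gen X q)"
  proof (rule Pr_cong)
    fix q assume q: "q \<in> Perm n"
    have "inj q" using q by (auto simp: Perm_def permutes_inj)
    hence "inj_on (q \<circ> f) {0..<k}" using injf by (auto intro: comp_inj_on inj_on_subset)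
    then obtain u where "u \<in> Perm k" "\<forall>a<k. \<forall>b<k. ((q \<circ> f) a < (q \<circ> f) b) = (u a < u b)"
      using std_exists by blast
    hence "\<exists>u\<in>Perm k. pat k f u q" by (auto simp: pat_def)
    thus "(\<exists>u\<in>Perm k. pat k f u q \<and> R q \<and> gen X q) = (R q \<and> gen X q)" by auto
  qed
  finally show ?thesis using e1 by simp
qed

end

definition SM :: "nat \<Rightarrow> nat \<Rightarrow> (nat \<Rightarrow> nat) set" where
  "SM n k = {f \<in> {0..<k} \<rightarrow>\<^sub>E {0..<n}. strict_mono_on {0..<k} f}"

lemma finite_SM[simp]: "finite (SM n k)"
proof -
  have "finite ({0..<k} \<rightarrow>\<^sub>E {0..<n})" by (rule finite_PiE) auto
  thus ?thesis unfolding SM_def by simp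
qed

lemma sm_sorted:
  assumes "strict_mono_on {0..<k} (f :: nat \<Rightarrow> nat)"
  shows "sorted_wrt (<) (map f [0..<k])"
  unfolding sorted_wrt_iff_nth_less using assms by (auto intro: strict_mono_onD)

lemma sm_img_inj:
  assumes f: "f \<in> SM n k" and g: "g \<in> SM n k" and e: "f ` {0..<k} = g ` {0..<k}"
  shows "f = g"
proof -
  have "map f [0..<k] = map g [0..<k]"
    by (rule strict_sorted_equal) (use f g e in \<open>auto simp: SM_def intro: sm_sorted\<close>)
  hence "\<And>a. a \<in> {0..<k} \<Longrightarrow> f a = g a" by (simp add: map_eq_conv)
  moreover have "f \<in> {0..<k} \<rightarrow>\<^sub>E {0..<n}" "g \<in> {0..<k} \<rightarrow>\<^sub>E {0..<n}" using f g by (auto simp: SM_def)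
  ultimately show ?thesis by (metis PiE_ext)
qed

lemma sm_img:
  assumes f: "f \<in> SM n k"
  shows "f ` {0..<k} \<subseteq> {0..<n}" "card (f ` {0..<k}) = k" "inj_on f {0..<k}"
proof -
  show "f ` {0..<k} \<subseteq> {0..<n}" using f by (auto simp: SM_def)
  show i: "inj_on f {0..<k}" using f by (auto simp: SM_def intro: strict_mono_on_imp_inj_on)
  show "card (f ` {0..<k}) = k" using card_image[OF i] by simp
qed

lemma sm_surj:
  assumes A: "A \<subseteq> {0..<n}" "card A = k"
  shows "\<exists>f\<in>SM n k. f ` {0..<k} = A"
proof -
  have finA: "finite A" using A finite_subset by blast
  define xs where "xs = sorted_list_of_set A"
  have sx: "sorted_wrt (<) xs" and setx: "set xs = A" and lx: "length xs = k"
    using finA A by (auto simp: xs_def)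
  define f where "f i = (if i < k then xs ! i else undefined)" for i
  have img: "f ` {0..<k} = A"
  proof -
    have "f ` {0..<k} = (\<lambda>i. xs ! i) ` {0..<length xs}" using lx by (auto simp: f_def)
    also have "\<dots> = set xs" by (auto simp: set_conv_nth)
    finally show ?thesis using setx by simp
  qed
  have "f \<in> {0..<k} \<rightarrow>\<^sub>E {0..<n}" using img A by (auto simp: f_def)
  moreover have "strict_mono_on {0..<k} f"
    using sx lx by (auto simp: f_def sorted_wrt_iff_nth_less intro!: strict_mono_onI)
  ultimately show ?thesis using img by (auto simp: SM_def)
qed

lemma card_SM: "card (SM n k) = n choose k"
proof -
  have "bij_betw (\<lambda>f. f ` {0..<k}) (SM n k) {A. A \<subseteq> {0..<n} \<and> card A = k}"
    unfolding bij_betw_def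
  proof
    show "inj_on (\<lambda>f. f ` {0..<k}) (SM n k)" by (auto intro: inj_onI sm_img_inj)
    show "(\<lambda>f. f ` {0..<k}) ` SM n k = {A. A \<subseteq> {0..<n} \<and> card A = k}"
    proof
      show "(\<lambda>f. f ` {0..<k}) ` SM n k \<subseteq> {A. A \<subseteq> {0..<n} \<and> card A = k}"
      proof
        fix A assume "A \<in> (\<lambda>f. f ` {0..<k}) ` SM n k"
        then obtain f where f: "f \<in> SM n k" "A = f ` {0..<k}" by blast
        show "A \<in> {A. A \<subseteq> {0..<n} \<and> card A = k}" using sm_img(1,2)[OF f(1)] f(2) by simp
      qed
      show "{A. A \<subseteq> {0..<n} \<and> card A = k} \<subseteq> (\<lambda>f. f ` {0..<k}) ` SM n k"
      proof
        fix A assume "A \<in> {A. A \<subseteq> {0..<n} \<and> card A = k}"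
        hence "A \<subseteq> {0..<n}" "card A = k" by auto
        then obtain f where "f \<in> SM n k" "f ` {0..<k} = A" using sm_surj by blast
        thus "A \<in> (\<lambda>f. f ` {0..<k}) ` SM n k" by blast
      qed
    qed
  qed
  hence "card (SM n k) = card {A. A \<subseteq> {0..<n} \<and> card A = k}" by (rule bij_betw_same_card)
  also have "\<dots> = n choose k" using n_subsets[of "{0..<n}" k] by simp
  finally show ?thesis .
qed

lemma card_SM_j:
  assumes j: "j < n" and k: "k \<ge> 1"
  shows "card {g\<in>SM n k. j \<in> g ` {0..<k}} \<le> (n - 1) choose (k - 1)"
proof -
  let ?T = "{B. B \<subseteq> {0..<n} - {j} \<and> card B = k - 1}"
  have "card {g\<in>SM n k. j \<in> g ` {0..<k}} \<le> card ?T"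
  proof (rule card_inj_on_le[where f = "\<lambda>g. g ` {0..<k} - {j}"])
    show "inj_on (\<lambda>g. g ` {0..<k} - {j}) {g\<in>SM n k. j \<in> g ` {0..<k}}"
    proof (rule inj_onI)
      fix g g' assume g: "g \<in> {g\<in>SM n k. j \<in> g ` {0..<k}}" and g': "g' \<in> {g\<in>SM n k. j \<in> g ` {0..<k}}"
        and e: "g ` {0..<k} - {j} = g' ` {0..<k} - {j}"
      have jg: "j \<in> g ` {0..<k}" using g unfolding mem_Collect_eq by (rule conjunct2)
      have jg': "j \<in> g' ` {0..<k}" using g' unfolding mem_Collect_eq by (rule conjunct2)
      have "g ` {0..<k} = g' ` {0..<k}" by (metis insert_Diff jg jg' e)
      moreover have "g \<in> SM n k" using g unfolding mem_Collect_eq by (rule conjunct1)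
      moreover have "g' \<in> SM n k" using g' unfolding mem_Collect_eq by (rule conjunct1)
      ultimately show "g = g'" using sm_img_inj by blast
    qed
    show "(\<lambda>g. g ` {0..<k} - {j}) ` {g\<in>SM n k. j \<in> g ` {0..<k}} \<subseteq> ?T"
    proof
      fix B assume "B \<in> (\<lambda>g. g ` {0..<k} - {j}) ` {g\<in>SM n k. j \<in> g ` {0..<k}}"
      then obtain g where g: "g \<in> SM n k" "j \<in> g ` {0..<k}" "B = g ` {0..<k} - {j}" by auto
      have "card B = k - 1" using g(2,3) sm_img(2)[OF g(1)] by (simp add: card_Diff_singleton)
      moreover have "B \<subseteq> {0..<n} - {j}" using g(3) sm_img(1)[OF g(1)] by blast
      ultimately show "B \<in> ?T" by blast
    qed
    show "finite ?T" by simp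
  qed
  also have "card ?T = (n - 1) choose (k - 1)"
    using n_subsets[of "{0..<n} - {j}" "k - 1"] j by simp
  finally show ?thesis .
qed

lemma binom_rel:
  assumes "k \<ge> 1"
  shows "real n * real ((n - 1) choose (k - 1)) = real k * real (n choose k)"
proof -
  obtain k' where k': "k = Suc k'" using assms by (cases k) auto
  have "Suc k' * (n choose Suc k') = n * ((n - 1) choose k')" by (rule binomial_absorption)
  hence "real (Suc k' * (n choose Suc k')) = real (n * ((n - 1) choose k'))" by simp
  thus ?thesis using k' by (simp only: of_nat_mult) simp
qed

lemma card_overlap:
  assumes f: "f \<in> SM n k" and k: "k \<ge> 1"
  shows "real (card {g\<in>SM n k. f ` {0..<k} \<inter> g ` {0..<k} \<noteq> {}}) \<le> real k ^ 2 * real (n choose k) / real n"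
proof -
  have sub: "{g\<in>SM n k. f ` {0..<k} \<inter> g ` {0..<k} \<noteq> {}} \<subseteq> (\<Union>a\<in>{0..<k}. {g\<in>SM n k. f a \<in> g ` {0..<k}})"
    by blast
  have "card {g\<in>SM n k. f ` {0..<k} \<inter> g ` {0..<k} \<noteq> {}} \<le> card (\<Union>a\<in>{0..<k}. {g\<in>SM n k. f a \<in> g ` {0..<k}})"
    by (rule card_mono[OF _ sub]) simp
  also have "\<dots> \<le> (\<Sum>a\<in>{0..<k}. card {g\<in>SM n k. f a \<in> g ` {0..<k}})" by (rule card_UN_le) simp
  also have "\<dots> \<le> (\<Sum>a\<in>{0..<k}. (n - 1) choose (k - 1))"
  proof (intro sum_mono card_SM_j k)
    fix a assume a: "a \<in> {0..<k}"
    have "f a \<in> f ` {0..<k}" using a by (rule imageI)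
    hence "f a \<in> {0..<n}" using sm_img(1)[OF f] by (rule subsetD[rotated])
    thus "f a < n" by simp
  qed
  also have "\<dots> = k * ((n - 1) choose (k - 1))" by simp
  finally have h: "real (card {g\<in>SM n k. f ` {0..<k} \<inter> g ` {0..<k} \<noteq> {}}) \<le> real k * real ((n - 1) choose (k - 1))"
    by (simp only: of_nat_mult[symmetric] of_nat_le_iff)
  have "n > 0" using sm_img[OF f] k by (cases n) auto
  hence "real k * real ((n - 1) choose (k - 1)) = real k ^ 2 * real (n choose k) / real n"
    using binom_rel[OF k, of n] by (simp add: field_simps power2_eq_square)
  thus ?thesis using h by simp
qed

lemma card_filter_sum: "finite A \<Longrightarrow> (\<Sum>x\<in>A. if P x then 1 else 0) = real (card {x\<in>A. P x})"
  by (simp add: sum.inter_filter[symmetric])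

context cdist
begin

definition del where "del = rho + 1 / (real n - 1)"

lemma del_nonneg: "n \<ge> 2 \<Longrightarrow> del \<ge> 0"
  unfolding del_def rho_def using Pr_nonneg[of "\<lambda>q. q 0 = 0"] by simp

lemma E1:
  assumes f: "f \<in> SM n k" and v: "v \<in> Perm k" and n2: "n \<ge> 2"
  shows "Pr (pat k f v) \<ge> (1 - real k ^ 2 * del) / fact k"
proof -
  define F where "F = f ` {0..<k}"
  have sm: "strict_mono_on {0..<k} f" using f by (simp add: SM_def)
  have Fn: "F \<subseteq> {0..<n}" and cF: "card F = k" using sm_img[OF f] by (auto simp: F_def)
  have "fact k * Pr (\<lambda>q. pat k f v q \<and> (\<lambda>_. True) q \<and> gen F q) = Pr (\<lambda>q. (\<lambda>_. True) q \<and> gen F q)"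
    by (rule sym_sum[OF sm _ Fn _ v]) (auto simp: F_def)
  hence h: "fact k * Pr (\<lambda>q. pat k f v q \<and> gen F q) = Pr (gen F)" by simp
  have "Pr (\<lambda>q. \<not> gen F q) \<le> real k ^ 2 * del"
    using Pr_not_gen[OF Fn n2] cF by (simp add: del_def)
  hence g: "Pr (gen F) \<ge> 1 - real k ^ 2 * del" using Pr_compl[of "gen F"] by simp
  have "Pr (\<lambda>q. pat k f v q \<and> gen F q) \<le> Pr (pat k f v)" by (rule Pr_mono) auto
  moreover have "Pr (\<lambda>q. pat k f v q \<and> gen F q) = Pr (gen F) / fact k"
    using h by (simp add: field_simps)
  ultimately have "Pr (gen F) / fact k \<le> Pr (pat k f v)" by simp
  moreover have "(1 - real k ^ 2 * del) / fact k \<le> Pr (gen F) / fact k"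
    using g by (intro divide_right_mono) auto
  ultimately show ?thesis by linarith
qed

lemma E2:
  assumes f: "f \<in> SM n k" and g: "g \<in> SM n k" and disj: "f ` {0..<k} \<inter> g ` {0..<k} = {}"
    and v: "v \<in> Perm k" and n2: "n \<ge> 2"
  shows "Pr (\<lambda>q. pat k f v q \<and> pat k g v q) \<le> 1 / (fact k)^2 + 4 * real k ^ 2 * del"
proof -
  define F where "F = f ` {0..<k}"
  define G where "G = g ` {0..<k}"
  define X where "X = F \<union> G"
  have smf: "strict_mono_on {0..<k} f" using f by (simp add: SM_def)
  have smg: "strict_mono_on {0..<k} g" using g by (simp add: SM_def)
  have Xn: "X \<subseteq> {0..<n}" using sm_img(1)[OF f] sm_img(1)[OF g] by (auto simp: X_def F_def G_def)
  have cX: "card X \<le> 2 * k"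
    using card_Un_le[of F G] sm_img(2)[OF f] sm_img(2)[OF g] by (simp add: X_def F_def G_def)
  have Rinv: "pat k g v (inv w \<circ> q \<circ> w) = pat k g v q"
    if w: "w permutes f ` {0..<k}" and q: "q \<in> Perm n" and ge: "gen X q" for w q
  proof -
    have iw: "inv w permutes F" using permutes_inv[OF w] by (simp add: F_def)
    have "(inv w \<circ> q \<circ> w) (g b) = q (g b)" if b: "b < k" for b
    proof -
      have gbG: "g b \<in> G" using b by (simp add: G_def)
      hence gbF: "g b \<notin> F" using disj by (auto simp: F_def G_def)
      hence "w (g b) = g b" using permutes_not_in[OF w] by (simp add: F_def)
      moreover have "q (g b) \<notin> X" using ge gbG by (simp add: gen_def X_def)
      hence "q (g b) \<notin> F" by (simp add: X_def)
      hence "inv w (q (g b)) = q (g b)" using permutes_not_in[OF iw] by simp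
      ultimately show ?thesis by simp
    qed
    thus ?thesis unfolding pat_def by simp
  qed
  have h1: "fact k * Pr (\<lambda>q. pat k f v q \<and> pat k g v q \<and> gen X q) = Pr (\<lambda>q. pat k g v q \<and> gen X q)"
    by (rule sym_sum[OF smf _ Xn Rinv v]) (auto simp: X_def F_def)
  have "fact k * Pr (\<lambda>q. pat k g v q \<and> (\<lambda>_. True) q \<and> gen X q) = Pr (\<lambda>q. (\<lambda>_. True) q \<and> gen X q)"
    by (rule sym_sum[OF smg _ Xn _ v]) (auto simp: X_def G_def)
  hence "fact k * Pr (\<lambda>q. pat k g v q \<and> gen X q) \<le> 1" using Pr_le1[of "gen X"] by simp
  hence "fact k * (fact k * Pr (\<lambda>q. pat k f v q \<and> pat k g v q \<and> gen X q)) \<le> 1" using h1 by simp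
  hence a: "Pr (\<lambda>q. pat k f v q \<and> pat k g v q \<and> gen X q) \<le> 1 / (fact k)^2"
    by (simp add: field_simps power2_eq_square)
  have b: "Pr (\<lambda>q. (pat k f v q \<and> pat k g v q) \<and> \<not> gen X q) \<le> 4 * real k ^ 2 * del"
  proof -
    have "Pr (\<lambda>q. (pat k f v q \<and> pat k g v q) \<and> \<not> gen X q) \<le> Pr (\<lambda>q. \<not> gen X q)"
      by (rule Pr_mono) auto
    also have "\<dots> \<le> real (card X) ^ 2 * del" using Pr_not_gen[OF Xn n2] by (simp add: del_def)
    also have "\<dots> \<le> (2 * real k) ^ 2 * del"
      using cX del_nonneg[OF n2] by (intro mult_right_mono power_mono) auto
    finally show ?thesis by (simp add: power2_eq_square)
  qed
  have "Pr (\<lambda>q. pat k f v q \<and> pat k g v q) =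
        Pr (\<lambda>q. (pat k f v q \<and> pat k g v q) \<and> gen X q) + Pr (\<lambda>q. (pat k f v q \<and> pat k g v q) \<and> \<not> gen X q)"
    by (rule Pr_split)
  thus ?thesis using a b by simp
qed

end

context cdist
begin

lemma main_bound:
  assumes n2: "n \<ge> 2" and k1: "k \<ge> 1" and kn: "k \<le> n" and v: "v \<in> Perm k" and e: "\<epsilon> > 0"
  shows "Pr (\<lambda>q. \<bar>real (pattern_count k v n q) / real (n choose k) - 1 / fact k\<bar> > \<epsilon>)
           \<le> (6 * real k ^ 2 * del + real k ^ 2 / real n) / \<epsilon>^2"
proof -
  define C where "C = real (n choose k)"
  define c where "c = 1 / (fact k :: real)"
  define N where "N q = real (card {f\<in>SM n k. pat k f v q})" for q
  define \<alpha> where "\<alpha> = c^2 + 4 * real k ^ 2 * del"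
  have pc: "real (pattern_count k v n q) = N q" for q
    unfolding pattern_count_def N_def SM_def pat_def by (simp add: conj_assoc)
  have Cpos: "C > 0" using kn by (simp add: C_def)
  have cardSM: "real (card (SM n k)) = C" by (simp add: C_def card_SM)
  have cpos: "c > 0" and cle: "c \<le> 1" by (auto simp: c_def)
  have dn: "del \<ge> 0" by (rule del_nonneg[OF n2])
  have a0: "\<alpha> \<ge> 0" using dn by (simp add: \<alpha>_def)
  have Nsum: "N q = (\<Sum>f\<in>SM n k. if pat k f v q then 1 else 0)" for q
    by (simp add: N_def card_filter_sum)
  have S1: "(\<Sum>p\<in>Perm n. m p * N p) = (\<Sum>f\<in>SM n k. Pr (pat k f v))"
  proof -
    have "(\<Sum>p\<in>Perm n. m p * N p) = (\<Sum>p\<in>Perm n. \<Sum>f\<in>SM n k. if pat k f v p then m p else 0)"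
      unfolding Nsum by (simp add: sum_distrib_left if_distrib cong: if_cong)
    also have "\<dots> = (\<Sum>f\<in>SM n k. Pr (pat k f v))" unfolding Pr_def by (rule sum.swap)
    finally show ?thesis .
  qed
  have S2: "(\<Sum>p\<in>Perm n. m p * N p ^ 2) = (\<Sum>f\<in>SM n k. \<Sum>g\<in>SM n k. Pr (\<lambda>q. pat k f v q \<and> pat k g v q))"
  proof -
    have "m p * N p ^ 2 = (\<Sum>f\<in>SM n k. \<Sum>g\<in>SM n k. if pat k f v p \<and> pat k g v p then m p else 0)" for p
    proof -
      have "N p ^ 2 = (\<Sum>f\<in>SM n k. \<Sum>g\<in>SM n k. (if pat k f v p then 1 else 0) * (if pat k g v p then 1 else 0))"
        unfolding power2_eq_square Nsum by (rule sum_product)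
      also have "\<dots> = (\<Sum>f\<in>SM n k. \<Sum>g\<in>SM n k. (if pat k f v p \<and> pat k g v p then 1 else 0))"
        by (intro sum.cong refl) simp
      finally have "m p * N p ^ 2 = (\<Sum>f\<in>SM n k. \<Sum>g\<in>SM n k. m p * (if pat k f v p \<and> pat k g v p then 1 else 0))"
        by (simp add: sum_distrib_left)
      also have "\<dots> = (\<Sum>f\<in>SM n k. \<Sum>g\<in>SM n k. if pat k f v p \<and> pat k g v p then m p else 0)"
        by (intro sum.cong refl) simp
      finally show ?thesis .
    qed
    hence "(\<Sum>p\<in>Perm n. m p * N p ^ 2) = (\<Sum>p\<in>Perm n. \<Sum>f\<in>SM n k. \<Sum>g\<in>SM n k. if pat k f v p \<and> pat k g v p then m p else 0)"
      by simp
    also have "\<dots> = (\<Sum>f\<in>SM n k. \<Sum>p\<in>Perm n. \<Sum>g\<in>SM n k. if pat k f v p \<and> pat k g v p then m p else 0)"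
      by (rule sum.swap)
    also have "\<dots> = (\<Sum>f\<in>SM n k. \<Sum>g\<in>SM n k. Pr (\<lambda>q. pat k f v q \<and> pat k g v q))"
      unfolding Pr_def by (intro sum.cong refl sum.swap)
    finally show ?thesis .
  qed
  have L1: "(\<Sum>f\<in>SM n k. Pr (pat k f v)) \<ge> C * (c * (1 - real k ^ 2 * del))"
  proof -
    have "(\<Sum>f\<in>SM n k. Pr (pat k f v)) \<ge> (\<Sum>f\<in>SM n k. (1 - real k ^ 2 * del) / fact k)"
      by (intro sum_mono E1 v n2)
    also have "(\<Sum>f\<in>SM n k. (1 - real k ^ 2 * del) / fact k) = C * (c * (1 - real k ^ 2 * del))"
      using cardSM by (simp add: c_def)
    finally show ?thesis .
  qed
  have L2: "(\<Sum>f\<in>SM n k. \<Sum>g\<in>SM n k. Pr (\<lambda>q. pat k f v q \<and> pat k g v q)) \<le> C * (C * \<alpha> + real k ^ 2 * C / real n)"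
  proof -
    have "(\<Sum>g\<in>SM n k. Pr (\<lambda>q. pat k f v q \<and> pat k g v q)) \<le> C * \<alpha> + real k ^ 2 * C / real n"
      if f: "f \<in> SM n k" for f
    proof -
      have "(\<Sum>g\<in>SM n k. Pr (\<lambda>q. pat k f v q \<and> pat k g v q)) \<le>
            (\<Sum>g\<in>SM n k. \<alpha> + (if f ` {0..<k} \<inter> g ` {0..<k} \<noteq> {} then 1 else 0))"
      proof (intro sum_mono)
        fix g assume g: "g \<in> SM n k"
        show "Pr (\<lambda>q. pat k f v q \<and> pat k g v q) \<le> \<alpha> + (if f ` {0..<k} \<inter> g ` {0..<k} \<noteq> {} then 1 else 0)"
        proof (cases "f ` {0..<k} \<inter> g ` {0..<k} = {}")
          case True
          thus ?thesis using E2[OF f g True v n2] by (simp add: \<alpha>_def c_def power_divide)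
        next
          case False
          thus ?thesis using Pr_le1[of "\<lambda>q. pat k f v q \<and> pat k g v q"] a0 by simp
        qed
      qed
      also have "\<dots> = C * \<alpha> + real (card {g\<in>SM n k. f ` {0..<k} \<inter> g ` {0..<k} \<noteq> {}})"
        by (simp add: sum.distrib card_filter_sum cardSM)
      also have "\<dots> \<le> C * \<alpha> + real k ^ 2 * C / real n"
        using card_overlap[OF f k1] by (simp add: C_def)
      finally show ?thesis .
    qed
    hence "(\<Sum>f\<in>SM n k. \<Sum>g\<in>SM n k. Pr (\<lambda>q. pat k f v q \<and> pat k g v q)) \<le> (\<Sum>f\<in>SM n k. C * \<alpha> + real k ^ 2 * C / real n)"
      by (intro sum_mono) auto
    also have "\<dots> = C * (C * \<alpha> + real k ^ 2 * C / real n)" using cardSM by simp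
    finally show ?thesis .
  qed
  define A1 where "A1 = (\<Sum>p\<in>Perm n. m p * N p)"
  define A2 where "A2 = (\<Sum>p\<in>Perm n. m p * N p ^ 2)"
  have expand: "(\<Sum>p\<in>Perm n. m p * (N p / C - c)^2) = A2 / C^2 - 2 * c / C * A1 + c^2"
  proof -
    have "m p * (N p / C - c)^2 = (m p * N p ^ 2) / C^2 - 2 * c / C * (m p * N p) + c^2 * m p" for p
      using Cpos by (simp add: field_simps power2_eq_square)
    hence "(\<Sum>p\<in>Perm n. m p * (N p / C - c)^2) =
       (\<Sum>p\<in>Perm n. (m p * N p ^ 2) / C^2 - 2 * c / C * (m p * N p) + c^2 * m p)" by simp
    also have "\<dots> = A2 / C^2 - 2 * c / C * A1 + c^2 * (\<Sum>p\<in>Perm n. m p)"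
      unfolding A1_def A2_def
      by (simp add: sum.distrib sum_subtractf sum_divide_distrib[symmetric] sum_distrib_left[symmetric])
    finally show ?thesis using tot by simp
  qed
  have A2b: "A2 / C^2 \<le> \<alpha> + real k ^ 2 / real n"
  proof -
    have "A2 \<le> C * (C * \<alpha> + real k ^ 2 * C / real n)" using L2 S2 by (simp add: A2_def)
    also have "\<dots> = C^2 * (\<alpha> + real k ^ 2 / real n)" by (simp add: field_simps power2_eq_square)
    finally show ?thesis using Cpos by (simp add: field_simps)
  qed
  have A1b: "2 * c / C * A1 \<ge> 2 * c^2 * (1 - real k ^ 2 * del)"
  proof -
    have "A1 \<ge> C * (c * (1 - real k ^ 2 * del))" using L1 S1 by (simp add: A1_def)
    hence "2 * c / C * A1 \<ge> 2 * c / C * (C * (c * (1 - real k ^ 2 * del)))"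
      using Cpos cpos by (intro mult_left_mono) auto
    moreover have "2 * c / C * (C * (c * (1 - real k ^ 2 * del))) = 2 * c^2 * (1 - real k ^ 2 * del)"
      using Cpos by (simp add: power2_eq_square)
    ultimately show ?thesis by simp
  qed
  have var: "(\<Sum>p\<in>Perm n. m p * (N p / C - c)^2) \<le> 6 * real k ^ 2 * del + real k ^ 2 / real n"
  proof -
    have "(\<Sum>p\<in>Perm n. m p * (N p / C - c)^2) \<le> \<alpha> + real k ^ 2 / real n - 2 * c^2 * (1 - real k ^ 2 * del) + c^2"
      using expand A2b A1b by linarith
    also have "\<dots> = 4 * real k ^ 2 * del + real k ^ 2 / real n + 2 * c^2 * (real k ^ 2 * del)"
      by (simp add: \<alpha>_def algebra_simps)
    also have "\<dots> \<le> 4 * real k ^ 2 * del + real k ^ 2 / real n + 2 * 1 * (real k ^ 2 * del)"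
    proof -
      have "c^2 \<le> 1" using cpos cle by (simp add: power_le_one)
      thus ?thesis using dn by (intro add_left_mono mult_left_mono mult_right_mono) auto
    qed
    finally show ?thesis by (simp add: algebra_simps)
  qed
  have cheb: "Pr (\<lambda>q. \<bar>N q / C - c\<bar> > \<epsilon>) \<le> (\<Sum>p\<in>Perm n. m p * (N p / C - c)^2) / \<epsilon>^2"
  proof -
    have "Pr (\<lambda>q. \<bar>N q / C - c\<bar> > \<epsilon>) \<le> (\<Sum>p\<in>Perm n. m p * ((N p / C - c)^2 / \<epsilon>^2))"
      unfolding Pr_def
    proof (intro sum_mono)
      fix p
      show "(if \<bar>N p / C - c\<bar> > \<epsilon> then m p else 0) \<le> m p * ((N p / C - c)^2 / \<epsilon>^2)"
      proof (cases "\<bar>N p / C - c\<bar> > \<epsilon>")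
        case True
        have "\<epsilon>^2 \<le> \<bar>N p / C - c\<bar>^2" using True e by (intro power_mono) auto
        hence "1 \<le> (N p / C - c)^2 / \<epsilon>^2" using e by (simp add: field_simps)
        hence "m p * 1 \<le> m p * ((N p / C - c)^2 / \<epsilon>^2)" using nonneg[of p] by (intro mult_left_mono) auto
        thus ?thesis using True by simp
      next
        case False thus ?thesis using nonneg[of p] by simp
      qed
    qed
    also have "\<dots> = (\<Sum>p\<in>Perm n. m p * (N p / C - c)^2) / \<epsilon>^2"
      by (simp add: sum_divide_distrib)
    finally show ?thesis .
  qed
  have "Pr (\<lambda>q. \<bar>real (pattern_count k v n q) / real (n choose k) - 1 / fact k\<bar> > \<epsilon>) =
        Pr (\<lambda>q. \<bar>N q / C - c\<bar> > \<epsilon>)" by (simp add: pc C_def c_def)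
  also have "\<dots> \<le> (6 * real k ^ 2 * del + real k ^ 2 / real n) / \<epsilon>^2"
    using cheb var e by (meson divide_right_mono order_trans zero_le_power2)
  finally show ?thesis .
qed

end

context cinv
begin

lemma cd: "cdist n (mm n)"
  by unfold_locales (auto simp: mm_nonneg mm_sum mm_conj)

lemma meas_Pr: "measure M {x \<in> space M. P (S n x)} = cdist.Pr n (mm n) P"
  using measure_pred cdist.Pr_alt[OF cd] by simp

lemma fp_le: "real (fixed_points n p) / real n \<le> 1" "real (fixed_points n p) / real n \<ge> 0"
proof -
  have "{i \<in> {0..<n}. p i = i} \<subseteq> {0..<n}" by blast
  hence "card {i \<in> {0..<n}. p i = i} \<le> card {0..<n}" by (rule card_mono[rotated]) simp
  hence "fixed_points n p \<le> n" unfolding fixed_points_def by simp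
  thus "real (fixed_points n p) / real n \<le> 1" by (cases "n = 0") (auto simp: field_simps)
  show "real (fixed_points n p) / real n \<ge> 0" by simp
qed

lemma rho_int:
  assumes "n \<ge> 1"
  shows "cdist.rho n (mm n) = integral\<^sup>L M (\<lambda>x. real (fixed_points n (S n x)) / real n)"
proof -
  have "cdist.rho n (mm n) = (\<Sum>p\<in>Perm n. mm n p * (real (fixed_points n p) / real n))"
    unfolding cdist.rho_def[OF cd] using cdist.Pr_fix0[OF cd, of 0] assms by simp
  also have "\<dots> = integral\<^sup>L M (\<lambda>x. real (fixed_points n (S n x)) / real n)"
    using integral_fun[of "\<lambda>p. real (fixed_points n p) / real n" n] by (simp add: mult.commute)
  finally show ?thesis .
qed

lemma rho_lim:
  assumes ae: "AE x in M. (\<lambda>n. real (fixed_points n (S n x)) / real n) \<longlonglongrightarrow> 0"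
  shows "(\<lambda>n. cdist.rho n (mm n)) \<longlonglongrightarrow> 0"
proof -
  have fm: "finite_measure M" by (rule prob_space.finite_measure[OF ps])
  have "(\<lambda>n. integral\<^sup>L M (\<lambda>x. real (fixed_points n (S n x)) / real n)) \<longlonglongrightarrow> integral\<^sup>L M (\<lambda>x. 0::real)"
  proof (rule integral_dominated_convergence[where w = "\<lambda>_. 1"])
    show "(\<lambda>x. 0::real) \<in> borel_measurable M" by simp
    show "\<And>i. (\<lambda>x. real (fixed_points i (S i x)) / real i) \<in> borel_measurable M"
      by (rule meas_fun)
    show "integrable M (\<lambda>_. 1::real)" by (rule finite_measure.integrable_const[OF fm])
    show "AE x in M. (\<lambda>i. real (fixed_points i (S i x)) / real i) \<longlonglongrightarrow> 0" by (rule ae)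
    show "\<And>i. AE x in M. norm (real (fixed_points i (S i x)) / real i) \<le> 1"
      using fp_le by (intro AE_I2) simp
  qed
  hence l: "(\<lambda>n. integral\<^sup>L M (\<lambda>x. real (fixed_points n (S n x)) / real n)) \<longlonglongrightarrow> 0" by simp
  have "eventually (\<lambda>n. integral\<^sup>L M (\<lambda>x. real (fixed_points n (S n x)) / real n) = cdist.rho n (mm n)) sequentially"
    by (intro eventually_mono[OF eventually_ge_at_top[of "1::nat"]]) (simp add: rho_int)
  thus ?thesis using l by (rule Lim_transform_eventually[rotated])
qed

end

theorem corollary5p9:
  fixes M :: "'a measure" and \<Sigma> :: "nat \<Rightarrow> 'a \<Rightarrow> nat \<Rightarrow> nat"
  assumes "prob_space M"
    and "\<And>n. \<Sigma> n \<in> M \<rightarrow>\<^sub>M count_space UNIV"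
    and "\<And>n x. x \<in> space M \<Longrightarrow> \<Sigma> n x permutes {0..<n}"
    and "\<And>n. conj_invariant M n (\<Sigma> n)"
    and "AE x in M. (\<lambda>n. real (fixed_points n (\<Sigma> n x)) / real n) \<longlonglongrightarrow> 0"
  shows "\<forall>k\<ge>1. \<forall>v. v permutes {0..<k} \<longrightarrow>
           (\<forall>\<epsilon>>0. (\<lambda>n. measure M {x \<in> space M.
               \<bar>real (pattern_count k v n (\<Sigma> n x)) / real (n choose k) - 1 / fact k\<bar> > \<epsilon>})
             \<longlonglongrightarrow> 0)"
proof (intro allI impI)
  fix k :: nat and v :: "nat \<Rightarrow> nat" and \<epsilon> :: real
  assume k1: "k \<ge> 1" and vp: "v permutes {0..<k}" and e: "\<epsilon> > 0"
  interpret cinv M \<Sigma> by (rule cinv.intro[OF assms(1-4)])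
  have v: "v \<in> Perm k" using vp by (simp add: Perm_def)
  define r where "r n = cdist.rho n (mm n)" for n
  have rl: "r \<longlonglongrightarrow> 0" unfolding r_def by (rule rho_lim[OF assms(5)])
  define B where "B n = (6 * real k ^ 2 * (r n + 2 * (1 / real n)) + real k ^ 2 * (1 / real n)) / \<epsilon>^2" for n
  have "B \<longlonglongrightarrow> (6 * real k ^ 2 * (0 + 2 * 0) + real k ^ 2 * 0) / \<epsilon>^2"
    unfolding B_def by (intro tendsto_intros rl lim_1_over_n) (use e in simp)
  hence Bl: "B \<longlonglongrightarrow> 0" by simp
  show "(\<lambda>n. measure M {x \<in> space M.
               \<bar>real (pattern_count k v n (\<Sigma> n x)) / real (n choose k) - 1 / fact k\<bar> > \<epsilon>}) \<longlonglongrightarrow> 0"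
  proof (rule tendsto_sandwich[OF _ _ tendsto_const Bl])
    show "\<forall>\<^sub>F n in sequentially. 0 \<le> measure M {x \<in> space M.
               \<bar>real (pattern_count k v n (\<Sigma> n x)) / real (n choose k) - 1 / fact k\<bar> > \<epsilon>}"
      by simp
    show "\<forall>\<^sub>F n in sequentially. measure M {x \<in> space M.
               \<bar>real (pattern_count k v n (\<Sigma> n x)) / real (n choose k) - 1 / fact k\<bar> > \<epsilon>} \<le> B n"
    proof (rule eventually_mono[OF eventually_ge_at_top[of "max 2 k"]])
      fix n assume nk: "max 2 k \<le> n"
      hence n2: "n \<ge> 2" and kn: "k \<le> n" by auto
      interpret c: cdist n "mm n" by (rule cd)
      have "measure M {x \<in> space M.
               \<bar>real (pattern_count k v n (\<Sigma> n x)) / real (n choose k) - 1 / fact k\<bar> > \<epsilon>}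
          = c.Pr (\<lambda>q. \<bar>real (pattern_count k v n q) / real (n choose k) - 1 / fact k\<bar> > \<epsilon>)"
        by (rule meas_Pr)
      also have "\<dots> \<le> (6 * real k ^ 2 * c.del + real k ^ 2 / real n) / \<epsilon>^2"
        by (rule c.main_bound[OF n2 k1 kn v e])
      also have "\<dots> \<le> B n"
      proof -
        have "1 / (real n - 1) \<le> 2 * (1 / real n)" using n2 by (simp add: field_simps)
        hence "c.del \<le> r n + 2 * (1 / real n)" by (simp add: c.del_def r_def)
        hence "6 * real k ^ 2 * c.del + real k ^ 2 / real n \<le>
               6 * real k ^ 2 * (r n + 2 * (1 / real n)) + real k ^ 2 * (1 / real n)"
          by (simp add: mult_left_mono)
        thus ?thesis unfolding B_def by (intro divide_right_mono) auto
      qed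
      finally show "measure M {x \<in> space M.
               \<bar>real (pattern_count k v n (\<Sigma> n x)) / real (n choose k) - 1 / fact k\<bar> > \<epsilon>} \<le> B n" .
    qed
  qed
qed

end
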